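(* Let $\mu$ be a probability measure on $\mathrm{Homeo}_+(\mathbb{R})$ with finite or countable support having the shiftability property. Then for every $x\in\mathbb{R}$, almost surely both $\limsup_{n\to\infty}F_n(x)$ and $\liminf_{n\to\infty}F_n(x)$ belong to $\{-\infty,+\infty\}$.
   Context: Setup. Let $\mu$ be a probability measure on the group $\mathrm{Homeo}_+(\mathbb{R})$ of orientation-preserving homeomorphisms of $\mathbb{R}$, supported on a finite or countable set $\{f_1,f_2,\dots\}$ with $p_i=\mu(\{f_i\})>0$, $\sum_i p_i=1$. Let $g_1,g_2,\dots$ be i.i.d. random maps with law $\mu$, and set $F_0=\mathrm{id}$, $F_n=g_n\circ\cdots\circ g_1$. The system has the shiftability property if for every $x\in\mathbb{R}$ there exist $f,g$ with $\mu(\{f\})>0$, $\mu(\{g\})>0$ and $g(x)<x<f(x)$. *)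

theory Defs
  imports "HOL-Probability.Probability"
begin

definition homeo_plus :: "(real \<Rightarrow> real) \<Rightarrow> bool" where
  "homeo_plus f \<longleftrightarrow> (\<exists>g. homeomorphism UNIV UNIV f g) \<and> strict_mono f"

definition shiftable :: "(real \<Rightarrow> real) pmf \<Rightarrow> bool" where
  "shiftable \<mu> \<longleftrightarrow> (\<forall>x. \<exists>f\<in>set_pmf \<mu>. \<exists>g\<in>set_pmf \<mu>. g x < x \<and> x < f x)"

text \<open>Random walk: F_0 = id and F_n = g_n o ... o g_1, where the stream
  omega = g_1, g_2, ... is the i.i.d. sequence of maps.\<close>
definition walk :: "nat \<Rightarrow> (real \<Rightarrow> real) stream \<Rightarrow> real \<Rightarrow> real" where
  "walk n \<omega> = fold (\<lambda>g h. g \<circ> h) (stake n \<omega>) id"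

end

theory Submission
  imports Defs
begin


abbreviation SS :: "(real \<Rightarrow> real) pmf \<Rightarrow> (real \<Rightarrow> real) stream measure" where
  "SS \<mu> \<equiv> stream_space (measure_pmf \<mu>)"

definition cl :: "(real \<Rightarrow> real) pmf \<Rightarrow> (real \<Rightarrow> real) \<Rightarrow> (real \<Rightarrow> real)" where
  "cl \<mu> g = (if g \<in> set_pmf \<mu> then g else id)"

fun cw :: "(real \<Rightarrow> real) pmf \<Rightarrow> nat \<Rightarrow> (real \<Rightarrow> real) stream \<Rightarrow> real \<Rightarrow> real" where
  "cw \<mu> 0 \<omega> y = y"
| "cw \<mu> (Suc n) \<omega> y = cw \<mu> n (stl \<omega>) (cl \<mu> (shd \<omega>) y)"

lemma countable_cl: "countable (range (cl \<mu>))"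
proof -
  have "range (cl \<mu>) \<subseteq> insert id (set_pmf \<mu>)" by (auto simp: cl_def)
  then show ?thesis by (meson countable_insert countable_set_pmf countable_subset)
qed

lemma cw_measurable[measurable]:
  "(\<lambda>\<omega>. cw \<mu> n \<omega> y) \<in> borel_measurable (stream_space (measure_pmf \<mu>))"
proof (induction n arbitrary: y)
  case 0
  then show ?case by simp
next
  case (Suc n)
  have "(\<lambda>\<omega>. cw \<mu> n (stl \<omega>) (cl \<mu> (shd \<omega>) y)) \<in> borel_measurable (stream_space (measure_pmf \<mu>))"
  proof (rule measurable_compose_countable'[where f="\<lambda>i \<omega>. cw \<mu> n (stl \<omega>) (i y)" and g="\<lambda>\<omega>. cl \<mu> (shd \<omega>)" and I="range (cl \<mu>)", OF _ _ countable_cl])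
    fix i show "(\<lambda>\<omega>. cw \<mu> n (stl \<omega>) (i y)) \<in> borel_measurable (stream_space (measure_pmf \<mu>))"
      using measurable_compose[OF measurable_stl Suc.IH] by simp
  next
    show "(\<lambda>\<omega>. cl \<mu> (shd \<omega>)) \<in> measurable (stream_space (measure_pmf \<mu>)) (count_space (range (cl \<mu>)))"
      by (rule measurable_compose[OF measurable_shd]) simp
  qed
  then show ?case by simp
qed

lemma space_S: "space (stream_space (measure_pmf \<mu>)) = UNIV"
  by (simp add: space_stream_space)

lemma step:
  assumes [measurable]: "Measurable.pred (stream_space (measure_pmf \<mu>)) Q"
  shows "measure (stream_space (measure_pmf \<mu>)) {\<omega>. Q \<omega>} =
         (\<integral>g. measure (stream_space (measure_pmf \<mu>)) {\<omega>. Q (g ## \<omega>)} \<partial>\<mu>)"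
proof -
  interpret S: prob_space "stream_space (measure_pmf \<mu>)"
    by (rule prob_space.prob_space_stream_space[OF prob_space_measure_pmf])
  have m: "{x \<in> space (stream_space (measure_pmf \<mu>)). Q x} \<in> sets (stream_space (measure_pmf \<mu>))"
    by measurable
  have "ennreal (measure (stream_space (measure_pmf \<mu>)) {\<omega>. Q \<omega>}) =
     (\<integral>\<^sup>+g. ennreal (measure (stream_space (measure_pmf \<mu>)) {\<omega>. Q (g ## \<omega>)}) \<partial>\<mu>)"
    using prob_space.prob_stream_space[OF prob_space_measure_pmf m] by (simp add: space_S)
  also have "\<dots> = ennreal (\<integral>g. measure (stream_space (measure_pmf \<mu>)) {\<omega>. Q (g ## \<omega>)} \<partial>\<mu>)"
    by (rule nn_integral_eq_integral)
       (auto intro!: measure_pmf.integrable_const_bound[where B=1])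
  finally show ?thesis
    by (subst (asm) ennreal_inj) (auto intro!: integral_nonneg_AE)
qed


definition Aset :: "(real \<Rightarrow> real) pmf \<Rightarrow> real \<Rightarrow> real \<Rightarrow> real \<Rightarrow> nat \<Rightarrow> real \<Rightarrow> (real \<Rightarrow> real) stream set" where
  "Aset \<mu> s lo c m y = {\<omega>. (\<forall>n\<ge>m. s * cw \<mu> n \<omega> y \<le> c) \<and>
      (\<forall>k. \<exists>n\<ge>k. lo \<le> s * cw \<mu> n \<omega> y \<and> s * cw \<mu> n \<omega> y \<le> c)}"

definition Dset :: "(real \<Rightarrow> real) pmf \<Rightarrow> real \<Rightarrow> real \<Rightarrow> real \<Rightarrow> nat \<Rightarrow> real \<Rightarrow> (real \<Rightarrow> real) stream set" where
  "Dset \<mu> s lo c k y = {\<omega>. \<omega> \<in> Aset \<mu> s lo c 0 y \<and>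
      (\<forall>n<k. \<not> (lo \<le> s * cw \<mu> n \<omega> y \<and> s * cw \<mu> n \<omega> y \<le> c))}"

lemma pred_le_S: "{\<omega>. s * cw \<mu> n \<omega> y \<le> c} \<in> sets (SS \<mu>)"
proof -
  have "(\<lambda>\<omega>. s * cw \<mu> n \<omega> y) \<in> borel_measurable (SS \<mu>)"
    by (intro borel_measurable_times borel_measurable_const cw_measurable)
  from borel_measurable_le[OF this borel_measurable_const[of c]]
  show ?thesis by (simp add: space_S)
qed

lemma pred_ge_S: "{\<omega>. lo \<le> s * cw \<mu> n \<omega> y} \<in> sets (SS \<mu>)"
proof -
  have "(\<lambda>\<omega>. s * cw \<mu> n \<omega> y) \<in> borel_measurable (SS \<mu>)"
    by (intro borel_measurable_times borel_measurable_const cw_measurable)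
  from borel_measurable_le[OF borel_measurable_const[of lo] this]
  show ?thesis by (simp add: space_S)
qed

lemma Aset_sets: "Aset \<mu> s lo c m y \<in> sets (SS \<mu>)"
proof -
  have "Aset \<mu> s lo c m y = (\<Inter>n\<in>{m..}. {\<omega>. s * cw \<mu> n \<omega> y \<le> c}) \<inter>
     (\<Inter>k. \<Union>n\<in>{k..}. {\<omega>. lo \<le> s * cw \<mu> n \<omega> y} \<inter> {\<omega>. s * cw \<mu> n \<omega> y \<le> c})"
    by (auto simp: Aset_def)
  also have "\<dots> \<in> sets (SS \<mu>)"
    using pred_le_S pred_ge_S by (intro sets.Int sets.countable_INT' sets.countable_UN') auto
  finally show ?thesis .
qed

lemma Dset_sets: "Dset \<mu> s lo c k y \<in> sets (SS \<mu>)"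
proof -
  have "Dset \<mu> s lo c k y = Aset \<mu> s lo c 0 y - (\<Union>n\<in>{..<k}. ({\<omega>. lo \<le> s * cw \<mu> n \<omega> y} \<inter> {\<omega>. s * cw \<mu> n \<omega> y \<le> c}))"
    by (auto simp: Dset_def)
  also have "\<dots> \<in> sets (SS \<mu>)"
    using pred_le_S pred_ge_S Aset_sets
    by (intro sets.Int sets.countable_UN' sets.Diff) auto
  finally show ?thesis .
qed

lemma freq_Suc: "(\<forall>k. \<exists>n\<ge>k. P (Suc n)) \<longleftrightarrow> (\<forall>k. \<exists>n\<ge>k. P n)"
proof
  assume a: "\<forall>k. \<exists>n\<ge>k. P (Suc n)"
  show "\<forall>k. \<exists>n\<ge>k. P n"
  proof
    fix k obtain n where "n \<ge> k" "P (Suc n)" using a by blast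
    then show "\<exists>n\<ge>k. P n" by (intro exI[of _ "Suc n"]) auto
  qed
next
  assume a: "\<forall>k. \<exists>n\<ge>k. P n"
  show "\<forall>k. \<exists>n\<ge>k. P (Suc n)"
  proof
    fix k obtain n where "n \<ge> Suc k" "P n" using a by blast
    then show "\<exists>n\<ge>k. P (Suc n)" by (intro exI[of _ "n - 1"]) auto
  qed
qed

lemma all_ge_Suc: "(\<forall>n\<ge>Suc m. P n) \<longleftrightarrow> (\<forall>n\<ge>m. P (Suc n))"
  by (metis Suc_le_D Suc_le_mono)

lemma all_ge_0: "(\<forall>n\<ge>(0::nat). P n) \<longleftrightarrow> P 0 \<and> (\<forall>n. P (Suc n))"
  by (metis le0 not0_implies_Suc)

lemma all_less_Suc: "(\<forall>n<Suc k. P n) \<longleftrightarrow> P 0 \<and> (\<forall>n<k. P (Suc n))"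
  by (metis less_Suc_eq_0_disj not_less_eq)

lemma cw_Stream: "cw \<mu> (Suc n) (g ## \<omega>) y = cw \<mu> n \<omega> (cl \<mu> g y)"
  by simp

lemma freq_shift: "(\<And>n. P (Suc n) = Q n) \<Longrightarrow> (\<forall>k. \<exists>n\<ge>k. P n) \<longleftrightarrow> (\<forall>k. \<exists>n\<ge>k. Q n)"
  using freq_Suc[of P] by simp

lemma all_shift0: "(\<And>n. P (Suc n) = Q n) \<Longrightarrow> (\<forall>n\<ge>(0::nat). P n) \<longleftrightarrow> P 0 \<and> (\<forall>n\<ge>0. Q n)"
  using all_ge_0[of P] by simp

lemma all_shiftSuc: "(\<And>n. P (Suc n) = Q n) \<Longrightarrow> (\<forall>n\<ge>Suc m. P n) \<longleftrightarrow> (\<forall>n\<ge>m. Q n)"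
  using all_ge_Suc[of m P] by simp

lemma less_shift: "(\<And>n. P (Suc n) = Q n) \<Longrightarrow> (\<forall>n<Suc k. P n) \<longleftrightarrow> P 0 \<and> (\<forall>n<k. Q n)"
  using all_less_Suc[of k P] by simp

lemma A0_Stream: "(g ## \<omega>) \<in> Aset \<mu> s lo c 0 y \<longleftrightarrow> s * y \<le> c \<and> \<omega> \<in> Aset \<mu> s lo c 0 (cl \<mu> g y)"
proof -
  have 1: "(\<forall>n\<ge>0. s * cw \<mu> n (g ## \<omega>) y \<le> c) \<longleftrightarrow> s * cw \<mu> 0 (g ## \<omega>) y \<le> c \<and> (\<forall>n\<ge>0. s * cw \<mu> n \<omega> (cl \<mu> g y) \<le> c)"
    by (rule all_shift0) (simp only: cw_Stream)
  have 2: "(\<forall>k. \<exists>n\<ge>k. lo \<le> s * cw \<mu> n (g ## \<omega>) y \<and> s * cw \<mu> n (g ## \<omega>) y \<le> c) \<longleftrightarrow>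
     (\<forall>k. \<exists>n\<ge>k. lo \<le> s * cw \<mu> n \<omega> (cl \<mu> g y) \<and> s * cw \<mu> n \<omega> (cl \<mu> g y) \<le> c)"
    by (rule freq_shift) (simp only: cw_Stream)
  have 3: "cw \<mu> 0 (g ## \<omega>) y = y" by (simp only: cw.simps)
  show ?thesis unfolding Aset_def mem_Collect_eq 1 2 3 by (simp only: conj_assoc)
qed

lemma ASuc_Stream: "(g ## \<omega>) \<in> Aset \<mu> s lo c (Suc m) y \<longleftrightarrow> \<omega> \<in> Aset \<mu> s lo c m (cl \<mu> g y)"
proof -
  have 1: "(\<forall>n\<ge>Suc m. s * cw \<mu> n (g ## \<omega>) y \<le> c) \<longleftrightarrow> (\<forall>n\<ge>m. s * cw \<mu> n \<omega> (cl \<mu> g y) \<le> c)"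
    by (rule all_shiftSuc) (simp only: cw_Stream)
  have 2: "(\<forall>k. \<exists>n\<ge>k. lo \<le> s * cw \<mu> n (g ## \<omega>) y \<and> s * cw \<mu> n (g ## \<omega>) y \<le> c) \<longleftrightarrow>
     (\<forall>k. \<exists>n\<ge>k. lo \<le> s * cw \<mu> n \<omega> (cl \<mu> g y) \<and> s * cw \<mu> n \<omega> (cl \<mu> g y) \<le> c)"
    by (rule freq_shift) (simp only: cw_Stream)
  show ?thesis unfolding Aset_def mem_Collect_eq 1 2 by (rule refl)
qed

lemma taut: "(a \<longleftrightarrow> ((S \<and> X) \<and> \<not> (L \<and> S) \<and> Q)) \<Longrightarrow> (S \<and> \<not> L \<longleftrightarrow> S \<and> T) \<Longrightarrow> (a \<longleftrightarrow> S \<and> T \<and> X \<and> Q)"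
  by blast

lemma DSuc_Stream: "(g ## \<omega>) \<in> Dset \<mu> s lo c (Suc k) y \<longleftrightarrow>
   s * y \<le> c \<and> s * y < lo \<and> \<omega> \<in> Dset \<mu> s lo c k (cl \<mu> g y)"
proof -
  have 1: "(\<forall>n<Suc k. \<not> (lo \<le> s * cw \<mu> n (g ## \<omega>) y \<and> s * cw \<mu> n (g ## \<omega>) y \<le> c)) \<longleftrightarrow>
     \<not> (lo \<le> s * cw \<mu> 0 (g ## \<omega>) y \<and> s * cw \<mu> 0 (g ## \<omega>) y \<le> c) \<and> (\<forall>n<k. \<not> (lo \<le> s * cw \<mu> n \<omega> (cl \<mu> g y) \<and> s * cw \<mu> n \<omega> (cl \<mu> g y) \<le> c))"
    by (rule less_shift) (simp only: cw_Stream)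
  have 3: "cw \<mu> 0 (g ## \<omega>) y = y" by (simp only: cw.simps)
  have "(g ## \<omega>) \<in> Dset \<mu> s lo c (Suc k) y \<longleftrightarrow> (s * y \<le> c \<and> \<omega> \<in> Aset \<mu> s lo c 0 (cl \<mu> g y)) \<and>
     \<not> (lo \<le> s * y \<and> s * y \<le> c) \<and> (\<forall>n<k. \<not> (lo \<le> s * cw \<mu> n \<omega> (cl \<mu> g y) \<and> s * cw \<mu> n \<omega> (cl \<mu> g y) \<le> c))"
    unfolding Dset_def mem_Collect_eq 1 3 A0_Stream ..
  moreover have "(s * y \<le> c \<and> \<not> lo \<le> s * y) \<longleftrightarrow> (s * y \<le> c \<and> s * y < lo)" by (simp add: not_le)
  ultimately show ?thesis unfolding Dset_def mem_Collect_eq by (rule taut)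
qed

lemma int_cl: "(\<integral>g. F (cl \<mu> g) \<partial>measure_pmf \<mu>) = (\<integral>g. F g \<partial>measure_pmf \<mu>)"
  by (rule integral_cong_AE) (auto simp: cl_def AE_measure_pmf_iff)


lemma hA0_rec: "measure (SS \<mu>) (Aset \<mu> s lo c 0 y) =
   (if s * y \<le> c then (\<integral>g. measure (SS \<mu>) (Aset \<mu> s lo c 0 (g y)) \<partial>\<mu>) else 0)"
proof -
  have "measure (SS \<mu>) (Aset \<mu> s lo c 0 y) = measure (SS \<mu>) {\<omega>. \<omega> \<in> Aset \<mu> s lo c 0 y}" by simp
  also have "\<dots> = (\<integral>g. measure (SS \<mu>) {\<omega>. g ## \<omega> \<in> Aset \<mu> s lo c 0 y} \<partial>\<mu>)"
    by (rule step) (simp add: pred_def space_S Aset_sets Dset_sets)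
  also have "\<dots> = (\<integral>g. (if s * y \<le> c then measure (SS \<mu>) (Aset \<mu> s lo c 0 (cl \<mu> g y)) else 0) \<partial>\<mu>)"
    by (cases "s * y \<le> c") (simp_all add: A0_Stream)
  also have "\<dots> = (if s * y \<le> c then (\<integral>g. measure (SS \<mu>) (Aset \<mu> s lo c 0 (cl \<mu> g y)) \<partial>\<mu>) else 0)"
    by simp
  also have "\<dots> = (if s * y \<le> c then (\<integral>g. measure (SS \<mu>) (Aset \<mu> s lo c 0 (g y)) \<partial>\<mu>) else 0)"
    using int_cl[where F="\<lambda>f. measure (SS \<mu>) (Aset \<mu> s lo c 0 (f y))" and \<mu>=\<mu>] by simp
  finally show ?thesis .
qed

lemma hASuc_rec: "measure (SS \<mu>) (Aset \<mu> s lo c (Suc m) y) =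
   (\<integral>g. measure (SS \<mu>) (Aset \<mu> s lo c m (g y)) \<partial>\<mu>)"
proof -
  have "measure (SS \<mu>) (Aset \<mu> s lo c (Suc m) y) = measure (SS \<mu>) {\<omega>. \<omega> \<in> Aset \<mu> s lo c (Suc m) y}" by simp
  also have "\<dots> = (\<integral>g. measure (SS \<mu>) {\<omega>. g ## \<omega> \<in> Aset \<mu> s lo c (Suc m) y} \<partial>\<mu>)"
    by (rule step) (simp add: pred_def space_S Aset_sets Dset_sets)
  also have "\<dots> = (\<integral>g. measure (SS \<mu>) (Aset \<mu> s lo c m (cl \<mu> g y)) \<partial>\<mu>)"
    by (simp add: ASuc_Stream)
  also have "\<dots> = (\<integral>g. measure (SS \<mu>) (Aset \<mu> s lo c m (g y)) \<partial>\<mu>)"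
    using int_cl[where F="\<lambda>f. measure (SS \<mu>) (Aset \<mu> s lo c m (f y))" and \<mu>=\<mu>] by simp
  finally show ?thesis .
qed

lemma hDSuc_rec: "s * y \<le> c \<Longrightarrow> s * y < lo \<Longrightarrow> measure (SS \<mu>) (Dset \<mu> s lo c (Suc k) y) =
   (\<integral>g. measure (SS \<mu>) (Dset \<mu> s lo c k (g y)) \<partial>\<mu>)"
proof -
  assume a: "s * y \<le> c" "s * y < lo"
  have "measure (SS \<mu>) (Dset \<mu> s lo c (Suc k) y) = measure (SS \<mu>) {\<omega>. \<omega> \<in> Dset \<mu> s lo c (Suc k) y}" by simp
  also have "\<dots> = (\<integral>g. measure (SS \<mu>) {\<omega>. g ## \<omega> \<in> Dset \<mu> s lo c (Suc k) y} \<partial>\<mu>)"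
    by (rule step) (simp add: pred_def space_S Aset_sets Dset_sets)
  also have "\<dots> = (\<integral>g. measure (SS \<mu>) (Dset \<mu> s lo c k (cl \<mu> g y)) \<partial>\<mu>)"
    using a by (simp add: DSuc_Stream)
  also have "\<dots> = (\<integral>g. measure (SS \<mu>) (Dset \<mu> s lo c k (g y)) \<partial>\<mu>)"
    using int_cl[where F="\<lambda>f. measure (SS \<mu>) (Dset \<mu> s lo c k (f y))" and \<mu>=\<mu>] by simp
  finally show ?thesis .
qed

lemma Dset_lim: "(\<lambda>k. measure (SS \<mu>) (Dset \<mu> s lo c k y)) \<longlonglongrightarrow> 0"
proof -
  interpret S: prob_space "SS \<mu>"
    by (rule prob_space.prob_space_stream_space[OF prob_space_measure_pmf])
  have "(\<lambda>k. measure (SS \<mu>) (Dset \<mu> s lo c k y)) \<longlonglongrightarrow> measure (SS \<mu>) (\<Inter>k. Dset \<mu> s lo c k y)"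
  proof (rule S.finite_Lim_measure_decseq)
    show "range (\<lambda>k. Dset \<mu> s lo c k y) \<subseteq> S.events" using Dset_sets by blast
    show "decseq (\<lambda>k. Dset \<mu> s lo c k y)"
      unfolding decseq_def Dset_def by (auto simp del: cw.simps)
  qed
  moreover have "(\<Inter>k. Dset \<mu> s lo c k y) = {}"
  proof -
    { fix \<omega> assume all: "\<forall>k. \<omega> \<in> Dset \<mu> s lo c k y"
      then have "\<omega> \<in> Aset \<mu> s lo c 0 y" by (simp add: Dset_def)
      then obtain n where n: "lo \<le> s * cw \<mu> n \<omega> y \<and> s * cw \<mu> n \<omega> y \<le> c"
        unfolding Aset_def by blast
      have "\<omega> \<in> Dset \<mu> s lo c (Suc n) y" using all by blast
      then have False using n unfolding Dset_def by blast }
    then show ?thesis by blast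
  qed
  ultimately show ?thesis by (metis measure_empty)
qed



lemma int_bound: "(\<And>g. 0 \<le> \<phi> g) \<Longrightarrow> (\<And>g. \<phi> g \<le> B) \<Longrightarrow> integrable (measure_pmf \<mu>) (\<phi> :: _ \<Rightarrow> real)"
proof -
  assume a: "\<And>g. 0 \<le> \<phi> g" "\<And>g. \<phi> g \<le> B"
  show ?thesis
    by (rule measure_pmf.integrable_const_bound[where B=B]) (use a in auto)
qed

lemma int_split:
  fixes \<phi> :: "(real \<Rightarrow> real) \<Rightarrow> real"
  assumes p0: "\<And>g. 0 \<le> \<phi> g" and pB: "\<And>g. \<phi> g \<le> B" and pf: "\<phi> f \<le> a" and a0: "0 \<le> a"
  shows "(\<integral>g. \<phi> g \<partial>measure_pmf \<mu>) \<le> B + (a - B) * pmf \<mu> f"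
proof -
  have B0: "0 \<le> B" using p0[of f] pB[of f] by linarith
  have "(\<integral>g. \<phi> g \<partial>measure_pmf \<mu>) \<le> (\<integral>g. B + (a - B) * indicator {f} g \<partial>measure_pmf \<mu>)"
  proof (rule integral_mono)
    show "integrable (measure_pmf \<mu>) \<phi>" using int_bound[OF p0 pB] .
    show "integrable (measure_pmf \<mu>) (\<lambda>g. B + (a - B) * indicator {f} g)"
    proof (rule int_bound[where B="max a B"])
      fix g show "0 \<le> B + (a - B) * indicator {f} g" using a0 B0 by (cases "g = f") auto
      show "B + (a - B) * indicator {f} g \<le> max a B" by (cases "g = f") auto
    qed
    fix g show "\<phi> g \<le> B + (a - B) * indicator {f} g"
      using pf pB[of g] by (cases "g = f") auto
  qed
  also have "\<dots> = B + (a - B) * pmf \<mu> f"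
  proof -
    have i1: "integrable (measure_pmf \<mu>) (\<lambda>g. B)" by (rule int_bound[where B=B]) (use B0 in auto)
    have i2: "integrable (measure_pmf \<mu>) (\<lambda>g. indicator {f} g :: real)"
      by (rule int_bound[where B=1]) (auto simp: indicator_def)
    have "(\<integral>g. B + (a - B) * indicator {f} g \<partial>measure_pmf \<mu>) =
        (\<integral>g. B \<partial>measure_pmf \<mu>) + (\<integral>g. (a - B) * indicator {f} g \<partial>measure_pmf \<mu>)"
      by (rule Bochner_Integration.integral_add[OF i1 integrable_mult_right[OF i2]])
    also have "\<dots> = B + (a - B) * measure (measure_pmf \<mu>) {f}"
      by simp
    finally show ?thesis by (simp add: measure_pmf_single)
  qed
  finally show ?thesis .
qed
lemma escape:
  fixes h :: "real \<Rightarrow> real" and \<mu> :: "(real \<Rightarrow> real) pmf"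
  assumes h0: "\<And>y. 0 \<le> h y" and hH: "\<And>y. h y \<le> H"
    and out: "\<And>y. c < s * y \<Longrightarrow> h y = 0"
    and rec: "\<And>y. s * y \<le> c \<Longrightarrow> h y \<le> (\<integral>g. h (g y) \<partial>measure_pmf \<mu>)"
    and unif: "\<And>y. lo \<le> s * y \<Longrightarrow> s * y \<le> c \<Longrightarrow> \<exists>f\<in>set_pmf \<mu>. \<delta> \<le> pmf \<mu> f \<and> s * y + \<epsilon> < s * f y"
    and d: "0 \<le> \<delta>" "\<delta> \<le> 1" and e: "0 < \<epsilon>"
  shows "lo \<le> s * y \<Longrightarrow> c - real k * \<epsilon> < s * y \<Longrightarrow> h y \<le> (1 - \<delta> ^ k) * H"
proof (induction k arbitrary: y)
  case 0
  then show ?case using out by simp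
next
  case (Suc k)
  have H0: "0 \<le> H" using h0 hH order_trans by blast
  have dk: "0 \<le> \<delta> ^ k" "\<delta> ^ k \<le> 1" "\<delta> ^ Suc k \<le> 1"
    by (intro zero_le_power power_le_one d)+
  show ?case
  proof (cases "c < s * y")
    case True
    then show ?thesis using out[OF True] H0 dk by simp
  next
    case False
    then have le: "s * y \<le> c" by simp
    obtain f where f: "f \<in> set_pmf \<mu>" "\<delta> \<le> pmf \<mu> f" "s * y + \<epsilon> < s * f y"
      using unif[OF Suc.prems(1) le] by blast
    have "lo \<le> s * f y" using Suc.prems(1) f(3) e by linarith
    moreover have "c - real k * \<epsilon> < s * f y" using Suc.prems(2) f(3) by (simp add: algebra_simps)
    ultimately have hf: "h (f y) \<le> (1 - \<delta> ^ k) * H" by (rule Suc.IH)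
    have "h y \<le> (\<integral>g. h (g y) \<partial>measure_pmf \<mu>)" by (rule rec[OF le])
    also have "\<dots> \<le> H + ((1 - \<delta> ^ k) * H - H) * pmf \<mu> f"
      by (rule int_split[where \<phi>="\<lambda>g. h (g y)"]) (use h0 hH hf H0 dk in auto)
    also have "\<dots> = H - \<delta> ^ k * H * pmf \<mu> f" by (simp add: algebra_simps)
    also have "\<dots> \<le> H - \<delta> ^ k * H * \<delta>"
      using mult_left_mono[OF f(2), of "\<delta> ^ k * H"] H0 dk by simp
    also have "\<dots> = (1 - \<delta> ^ Suc k) * H" by (simp add: algebra_simps)
    finally show ?thesis .
  qed
qed

lemma hit:
  fixes h :: "real \<Rightarrow> real" and \<mu> :: "(real \<Rightarrow> real) pmf" and D :: "nat \<Rightarrow> real \<Rightarrow> real"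
  assumes h0: "\<And>y. 0 \<le> h y" and h1: "\<And>y. h y \<le> 1"
    and out: "\<And>y. c < s * y \<Longrightarrow> h y = 0"
    and rec: "\<And>y. s * y \<le> c \<Longrightarrow> h y \<le> (\<integral>g. h (g y) \<partial>measure_pmf \<mu>)"
    and D0: "\<And>k y. 0 \<le> D k y" and D1: "\<And>k y. D k y \<le> 1" and Dh: "\<And>y. D 0 y = h y"
    and Drec: "\<And>k y. s * y \<le> c \<Longrightarrow> s * y < lo \<Longrightarrow> D (Suc k) y = (\<integral>g. D k (g y) \<partial>measure_pmf \<mu>)"
    and Dlim: "\<And>y. (\<lambda>k. D k y) \<longlonglongrightarrow> 0"
    and J: "\<And>y. lo \<le> s * y \<Longrightarrow> s * y \<le> c \<Longrightarrow> h y \<le> t" and t0: "0 \<le> t"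
  shows "h y \<le> t"
proof -
  have claim: "h y \<le> t + D k y" for k y
  proof (induction k arbitrary: y)
    case 0
    show ?case using Dh t0 by simp
  next
    case (Suc k)
    consider "c < s * y" | "lo \<le> s * y \<and> s * y \<le> c" | "s * y \<le> c \<and> s * y < lo" by linarith
    then show ?case
    proof cases
      case 1
      then show ?thesis using out[OF 1] t0 D0[of "Suc k" y] by simp
    next
      case 2
      then show ?thesis using J[of y] D0[of "Suc k" y] by simp
    next
      case 3
      have "h y \<le> (\<integral>g. h (g y) \<partial>measure_pmf \<mu>)" using 3 by (intro rec) simp
      also have "\<dots> \<le> (\<integral>g. t + D k (g y) \<partial>measure_pmf \<mu>)"
      proof (rule integral_mono)
        show "integrable (measure_pmf \<mu>) (\<lambda>g. h (g y))"
          by (rule int_bound[where B=1]) (use h0 h1 in auto)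
        show "integrable (measure_pmf \<mu>) (\<lambda>g. t + D k (g y))"
          by (rule int_bound[where B="t + 1"]) (use D0 D1 t0 in \<open>auto intro: add_nonneg_nonneg\<close>)
        fix g show "h (g y) \<le> t + D k (g y)" by (rule Suc.IH)
      qed
      also have "\<dots> = t + (\<integral>g. D k (g y) \<partial>measure_pmf \<mu>)"
      proof -
        have "integrable (measure_pmf \<mu>) (\<lambda>g. D k (g y))"
          by (rule int_bound[where B=1]) (use D0 D1 in auto)
        then show ?thesis by simp
      qed
      also have "\<dots> = t + D (Suc k) y" using 3 Drec by simp
      finally show ?thesis .
    qed
  qed
  have "(\<lambda>k. t + D k y) \<longlonglongrightarrow> t + 0" by (intro tendsto_add tendsto_const Dlim)
  then show ?thesis using claim by (intro LIMSEQ_le_const) auto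
qed

lemma zero:
  fixes h :: "real \<Rightarrow> real" and \<mu> :: "(real \<Rightarrow> real) pmf" and D :: "nat \<Rightarrow> real \<Rightarrow> real"
  assumes h0: "\<And>y. 0 \<le> h y" and h1: "\<And>y. h y \<le> 1"
    and out: "\<And>y. c < s * y \<Longrightarrow> h y = 0"
    and rec: "\<And>y. s * y \<le> c \<Longrightarrow> h y \<le> (\<integral>g. h (g y) \<partial>measure_pmf \<mu>)"
    and D0: "\<And>k y. 0 \<le> D k y" and D1: "\<And>k y. D k y \<le> 1" and Dh: "\<And>y. D 0 y = h y"
    and Drec: "\<And>k y. s * y \<le> c \<Longrightarrow> s * y < lo \<Longrightarrow> D (Suc k) y = (\<integral>g. D k (g y) \<partial>measure_pmf \<mu>)"
    and Dlim: "\<And>y. (\<lambda>k. D k y) \<longlonglongrightarrow> 0"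
    and unif: "\<And>y. lo \<le> s * y \<Longrightarrow> s * y \<le> c \<Longrightarrow> \<exists>f\<in>set_pmf \<mu>. \<delta> \<le> pmf \<mu> f \<and> s * y + \<epsilon> < s * f y"
    and d: "0 < \<delta>" "\<delta> \<le> 1" and e: "0 < \<epsilon>"
  shows "h y = 0"
proof -
  define H where "H = Sup (range h)"
  have bdd: "bdd_above (range h)" using h1 by (intro bdd_aboveI[where M=1]) auto
  have hH: "h z \<le> H" for z unfolding H_def by (rule cSup_upper[OF _ bdd]) simp
  have H0: "0 \<le> H" using h0[of 0] hH[of 0] by simp
  obtain N :: nat where N: "(c - lo) / \<epsilon> < N" using reals_Archimedean2 by blast
  then have N': "c - real N * \<epsilon> < lo" using e by (simp add: field_simps)
  define t where "t = (1 - \<delta> ^ N) * H"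
  have dN: "0 < \<delta> ^ N" "\<delta> ^ N \<le> 1" using d by (auto simp: power_le_one)
  have t0: "0 \<le> t" unfolding t_def using dN H0 by simp
  have J: "h z \<le> t" if "lo \<le> s * z" "s * z \<le> c" for z
    unfolding t_def
    by (rule escape[where lo=lo and c=c and s=s and \<mu>=\<mu> and \<delta>=\<delta> and \<epsilon>=\<epsilon>])
       (use h0 hH out rec unif d e that N' in auto)
  have all: "h z \<le> t" for z
    by (rule hit[where lo=lo and c=c and s=s and \<mu>=\<mu> and D=D])
       (use h0 h1 out rec D0 D1 Dh Drec Dlim J t0 in auto)
  have "H \<le> t" unfolding H_def by (rule cSup_least) (use all in auto)
  then have "\<delta> ^ N * H \<le> 0" unfolding t_def by (simp add: algebra_simps)
  then have "H \<le> 0" using dN(1) by (simp add: mult_le_0_iff)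
  then show ?thesis using h0[of y] hH[of y] by simp
qed

lemma uniform:
  fixes \<mu> :: "(real \<Rightarrow> real) pmf" and s lo c :: real
  assumes homeo: "\<forall>f\<in>set_pmf \<mu>. homeo_plus f" and sh: "shiftable \<mu>" and s: "s = 1 \<or> s = -1"
  shows "\<exists>\<epsilon>>0. \<exists>\<delta>>0. \<delta> \<le> 1 \<and> (\<forall>y. lo \<le> s * y \<and> s * y \<le> c \<longrightarrow>
            (\<exists>f\<in>set_pmf \<mu>. \<delta> \<le> pmf \<mu> f \<and> s * y + \<epsilon> < s * f y))"
proof -
  define J where "J = {y. lo \<le> s * y \<and> s * y \<le> c}"
  have cJ: "compact J"
  proof (cases "s = 1")
    case True
    then have "J = {lo..c}" by (auto simp: J_def)
    then show ?thesis by simp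
  next
    case False
    then have "s = -1" using s by simp
    then have "J = {-c..-lo}" by (auto simp: J_def)
    then show ?thesis by simp
  qed
  have cont: "continuous_on UNIV f" if "f \<in> set_pmf \<mu>" for f
    using homeo that unfolding homeo_plus_def homeomorphism_def by blast
  define U where "U = (\<lambda>p::(real \<Rightarrow> real) \<times> nat. {y. s * y + inverse (real (snd p)) < s * fst p y})"
  have opn: "open (U p)" if "p \<in> set_pmf \<mu> \<times> {0<..}" for p
  proof -
    have cf: "continuous_on UNIV (fst p)" using that cont by auto
    have "continuous_on UNIV (\<lambda>y. s * fst p y)"
      by (intro continuous_on_mult continuous_on_const cf)
    moreover have "continuous_on UNIV (\<lambda>y. s * y + inverse (real (snd p)))"
      by (intro continuous_intros)
    ultimately show ?thesis unfolding U_def by (rule open_Collect_less[rotated])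
  qed
  have cov: "J \<subseteq> (\<Union>p\<in>set_pmf \<mu> \<times> {0<..}. U p)"
  proof
    fix y assume yJ: "y \<in> J"
    obtain f where f: "f \<in> set_pmf \<mu>" "s * y < s * f y"
    proof -
      obtain f g where fg: "f \<in> set_pmf \<mu>" "g \<in> set_pmf \<mu>" "g y < y" "y < f y"
        using sh unfolding shiftable_def by blast
      show ?thesis
      proof (cases "s = 1")
        case True then show ?thesis using that fg by auto
      next
        case False then have "s = -1" using s by simp
        then show ?thesis using that fg by auto
      qed
    qed
    obtain m :: nat where m: "m > 0" "inverse (real m) < s * f y - s * y"
      using ex_inverse_of_nat_less[of "s * f y - s * y"] f by auto
    show "y \<in> (\<Union>p\<in>set_pmf \<mu> \<times> {0<..}. U p)"
      using f m unfolding U_def by (intro UN_I[of "(f, m)"]) auto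
  qed
  obtain K where K: "K \<subseteq> set_pmf \<mu> \<times> {0<..}" "finite K" "J \<subseteq> (\<Union>p\<in>K. U p)"
    using compactE_image[OF cJ, of "set_pmf \<mu> \<times> {0<..}" U] opn cov by metis
  show ?thesis
  proof (cases "K = {}")
    case True
    then have "J = {}" using K by auto
    then have "\<not> (lo \<le> s * y \<and> s * y \<le> c)" for y by (auto simp: J_def)
    then show ?thesis by (intro exI[of _ 1] conjI allI impI) auto
  next
    case False
    define \<epsilon> where "\<epsilon> = Min ((\<lambda>p. inverse (real (snd p))) ` K)"
    define \<delta> where "\<delta> = Min ((\<lambda>p. pmf \<mu> (fst p)) ` K)"
    have e0: "0 < \<epsilon>" unfolding \<epsilon>_def using K False by (subst Min_gr_iff) auto
    have d0: "0 < \<delta>" unfolding \<delta>_def using K False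
      by (subst Min_gr_iff) (auto simp: set_pmf_iff pmf_nonneg order_le_less)
    obtain p0 where p0: "p0 \<in> K" using False by blast
    have "\<delta> \<le> pmf \<mu> (fst p0)" unfolding \<delta>_def using K p0 by (intro Min_le) auto
    then have d1: "\<delta> \<le> 1" using pmf_le_1[of \<mu> "fst p0"] by linarith
    have main: "\<forall>y. lo \<le> s * y \<and> s * y \<le> c \<longrightarrow> (\<exists>f\<in>set_pmf \<mu>. \<delta> \<le> pmf \<mu> f \<and> s * y + \<epsilon> < s * f y)"
    proof (intro allI impI)
      fix y assume "lo \<le> s * y \<and> s * y \<le> c"
      then have "y \<in> J" by (simp add: J_def)
      then obtain p where p: "p \<in> K" "y \<in> U p" using K by blast
      have "\<epsilon> \<le> inverse (real (snd p))" unfolding \<epsilon>_def using K p by (intro Min_le) auto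
      moreover have "\<delta> \<le> pmf \<mu> (fst p)" unfolding \<delta>_def using K p by (intro Min_le) auto
      moreover have "fst p \<in> set_pmf \<mu>" using K p by auto
      ultimately show "\<exists>f\<in>set_pmf \<mu>. \<delta> \<le> pmf \<mu> f \<and> s * y + \<epsilon> < s * f y"
        using p(2) unfolding U_def by (intro bexI[of _ "fst p"]) auto
    qed
    show ?thesis using main e0 d0 d1 by blast
  qed
qed

lemma fold_comp: "fold (\<lambda>g h. g \<circ> h) xs u = fold (\<lambda>g h. g \<circ> h) xs id \<circ> (u :: 'a \<Rightarrow> 'a)"
proof (induction xs arbitrary: u)
  case Nil
  then show ?case by simp
next
  case (Cons a xs)
  have "fold (\<lambda>g h. g \<circ> h) (a # xs) u = fold (\<lambda>g h. g \<circ> h) xs (a \<circ> u)"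
    by simp
  also have "\<dots> = fold (\<lambda>g h. g \<circ> h) xs id \<circ> (a \<circ> u)"
    by (rule Cons.IH)
  also have "\<dots> = (fold (\<lambda>g h. g \<circ> h) xs id \<circ> a) \<circ> u"
    by (simp only: comp_assoc)
  also have "fold (\<lambda>g h. g \<circ> h) xs id \<circ> a = fold (\<lambda>g h. g \<circ> h) xs a"
    by (rule Cons.IH[symmetric])
  also have "\<dots> = fold (\<lambda>g h. g \<circ> h) (a # xs) id"
    by simp
  finally show ?case .
qed

lemma walk_Suc: "walk (Suc n) \<omega> y = walk n (stl \<omega>) (shd \<omega> y)"
proof -
  have "walk (Suc n) \<omega> = fold (\<lambda>g h. g \<circ> h) (stake n (stl \<omega>)) (shd \<omega> \<circ> id)"
    unfolding walk_def by simp
  also have "\<dots> = walk n (stl \<omega>) \<circ> shd \<omega>"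
    unfolding walk_def by (subst fold_comp) simp
  finally show ?thesis by simp
qed


lemma A0_zero:
  assumes homeo: "\<forall>f\<in>set_pmf \<mu>. homeo_plus f" and sh: "shiftable \<mu>" and s: "s = 1 \<or> s = -1"
  shows "measure (SS \<mu>) (Aset \<mu> s lo c 0 y) = 0"
proof -
  interpret S: prob_space "SS \<mu>"
    by (rule prob_space.prob_space_stream_space[OF prob_space_measure_pmf])
  obtain \<epsilon> \<delta> where e: "0 < \<epsilon>" and d: "0 < \<delta>" "\<delta> \<le> 1"
    and unif: "\<forall>y. lo \<le> s * y \<and> s * y \<le> c \<longrightarrow> (\<exists>f\<in>set_pmf \<mu>. \<delta> \<le> pmf \<mu> f \<and> s * y + \<epsilon> < s * f y)"
    using uniform[OF homeo sh s, of lo c] by blast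
  define h where "h = (\<lambda>y. measure (SS \<mu>) (Aset \<mu> s lo c 0 y))"
  define D where "D = (\<lambda>k y. measure (SS \<mu>) (Dset \<mu> s lo c k y))"
  have h0: "\<And>y. 0 \<le> h y" and h1: "\<And>y. h y \<le> 1"
    unfolding h_def by (simp_all add: S.prob_le_1)
  have out: "\<And>y. c < s * y \<Longrightarrow> h y = 0"
    unfolding h_def by (subst hA0_rec) simp
  have rec: "\<And>y. s * y \<le> c \<Longrightarrow> h y \<le> (\<integral>g. h (g y) \<partial>measure_pmf \<mu>)"
    unfolding h_def by (subst hA0_rec) simp
  have D0: "\<And>k y. 0 \<le> D k y" and D1: "\<And>k y. D k y \<le> 1"
    unfolding D_def by (simp_all add: S.prob_le_1)
  have Dh: "\<And>y. D 0 y = h y"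
    unfolding D_def h_def by (simp add: Dset_def)
  have Drec: "\<And>k y. s * y \<le> c \<Longrightarrow> s * y < lo \<Longrightarrow> D (Suc k) y = (\<integral>g. D k (g y) \<partial>measure_pmf \<mu>)"
    unfolding D_def by (rule hDSuc_rec)
  have Dlim: "\<And>y. (\<lambda>k. D k y) \<longlonglongrightarrow> 0"
    unfolding D_def by (rule Dset_lim)
  have "h y = 0"
    by (rule zero[where lo=lo and c=c and s=s and \<mu>=\<mu> and D=D and \<delta>=\<delta> and \<epsilon>=\<epsilon>])
       (use h0 h1 out rec D0 D1 Dh Drec Dlim unif d e in auto)
  then show ?thesis by (simp add: h_def)
qed

lemma A_zero:
  assumes homeo: "\<forall>f\<in>set_pmf \<mu>. homeo_plus f" and sh: "shiftable \<mu>" and s: "s = 1 \<or> s = -1"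
  shows "measure (SS \<mu>) (Aset \<mu> s lo c m y) = 0"
proof (induction m arbitrary: y)
  case 0
  then show ?case using A0_zero[OF homeo sh s] by simp
next
  case (Suc m)
  then show ?case by (subst hASuc_rec) simp
qed

lemma walk_cw: "\<omega> \<in> streams (set_pmf \<mu>) \<Longrightarrow> walk n \<omega> y = cw \<mu> n \<omega> y"
proof (induction n arbitrary: \<omega> y)
  case 0
  then show ?case by (simp add: walk_def)
next
  case (Suc n)
  have "shd \<omega> \<in> set_pmf \<mu>" using streams_shd[OF Suc.prems] .
  then have "cl \<mu> (shd \<omega>) = shd \<omega>" by (simp add: cl_def)
  then show ?case using Suc.IH[OF streams_stl[OF Suc.prems]] by (simp add: walk_Suc)
qed

lemma pointwise:
  fixes r :: "nat \<Rightarrow> real"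
  assumes no: "\<And>b lo c m. \<not> ((\<forall>n\<ge>m. (if b then 1 else -1) * r n \<le> real_of_int c) \<and>
      (\<forall>k. \<exists>n\<ge>k. real_of_int lo \<le> (if b then 1 else -1) * r n \<and> (if b then 1 else -1) * r n \<le> real_of_int c))"
  shows "limsup (\<lambda>n. ereal (r n)) \<in> {-\<infinity>, \<infinity>} \<and> liminf (\<lambda>n. ereal (r n)) \<in> {-\<infinity>, \<infinity>}"
proof
  show "limsup (\<lambda>n. ereal (r n)) \<in> {-\<infinity>, \<infinity>}"
  proof (rule ccontr)
    assume "limsup (\<lambda>n. ereal (r n)) \<notin> {-\<infinity>, \<infinity>}"
    then obtain L where L: "limsup (\<lambda>n. ereal (r n)) = ereal L" by (cases "limsup (\<lambda>n. ereal (r n))") auto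
    define k where "k = \<lfloor>L\<rfloor>"
    have kL: "real_of_int k \<le> L" "L < real_of_int k + 1" unfolding k_def by linarith+
    have "eventually (\<lambda>n. ereal (r n) < ereal (real_of_int k + 1)) sequentially"
      by (rule Limsup_lessD) (use L kL in simp)
    then obtain m where m: "\<And>n. n \<ge> m \<Longrightarrow> r n < real_of_int k + 1"
      unfolding eventually_sequentially by auto
    have fr: "\<exists>n\<ge>K. real_of_int k - 1 < r n" for K
    proof (rule ccontr)
      assume "\<not> (\<exists>n\<ge>K. real_of_int k - 1 < r n)"
      then have "eventually (\<lambda>n. ereal (r n) \<le> ereal (real_of_int k - 1)) sequentially"
        unfolding eventually_sequentially by (auto simp: not_less)
      then have "limsup (\<lambda>n. ereal (r n)) \<le> ereal (real_of_int k - 1)" by (rule Limsup_bounded)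
      then show False using L kL by simp
    qed
    have "(\<forall>n\<ge>m. (if True then 1 else -1) * r n \<le> real_of_int (k + 2)) \<and>
      (\<forall>K. \<exists>n\<ge>K. real_of_int (k - 1) \<le> (if True then 1 else -1) * r n \<and> (if True then 1 else -1) * r n \<le> real_of_int (k + 2))"
    proof (intro conjI allI impI)
      fix n assume "m \<le> n" then show "(if True then 1 else -1) * r n \<le> real_of_int (k + 2)" using m[of n] by simp
    next
      fix K
      obtain n where n: "n \<ge> max K m" "real_of_int k - 1 < r n" using fr by blast
      then show "\<exists>n\<ge>K. real_of_int (k - 1) \<le> (if True then 1 else -1) * r n \<and> (if True then 1 else -1) * r n \<le> real_of_int (k + 2)"
        using m[of n] by (intro exI[of _ n]) auto
    qed
    then show False using no by blast
  qed
next
  show "liminf (\<lambda>n. ereal (r n)) \<in> {-\<infinity>, \<infinity>}"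
  proof (rule ccontr)
    assume "liminf (\<lambda>n. ereal (r n)) \<notin> {-\<infinity>, \<infinity>}"
    then obtain L where L: "liminf (\<lambda>n. ereal (r n)) = ereal L" by (cases "liminf (\<lambda>n. ereal (r n))") auto
    define k where "k = \<lfloor>L\<rfloor>"
    have kL: "real_of_int k \<le> L" "L < real_of_int k + 1" unfolding k_def by linarith+
    have "eventually (\<lambda>n. ereal (real_of_int k - 1) < ereal (r n)) sequentially"
      by (rule less_LiminfD) (use L kL in simp)
    then obtain m where m: "\<And>n. n \<ge> m \<Longrightarrow> real_of_int k - 1 < r n"
      unfolding eventually_sequentially by auto
    have fr: "\<exists>n\<ge>K. r n < real_of_int k + 1" for K
    proof (rule ccontr)
      assume "\<not> (\<exists>n\<ge>K. r n < real_of_int k + 1)"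
      then have "eventually (\<lambda>n. ereal (real_of_int k + 1) \<le> ereal (r n)) sequentially"
        unfolding eventually_sequentially by (auto simp: not_less)
      then have "ereal (real_of_int k + 1) \<le> liminf (\<lambda>n. ereal (r n))" by (rule Liminf_bounded)
      then show False using L kL by simp
    qed
    have "(\<forall>n\<ge>m. (if False then 1 else -1) * r n \<le> real_of_int (1 - k)) \<and>
      (\<forall>K. \<exists>n\<ge>K. real_of_int (- k - 1) \<le> (if False then 1 else -1) * r n \<and> (if False then 1 else -1) * r n \<le> real_of_int (1 - k))"
    proof (intro conjI allI impI)
      fix n assume "m \<le> n" then show "(if False then 1 else -1) * r n \<le> real_of_int (1 - k)" using m[of n] by simp
    next
      fix K
      obtain n where n: "n \<ge> max K m" "r n < real_of_int k + 1" using fr by blast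
      then show "\<exists>n\<ge>K. real_of_int (- k - 1) \<le> (if False then 1 else -1) * r n \<and> (if False then 1 else -1) * r n \<le> real_of_int (1 - k)"
        using m[of n] by (intro exI[of _ n]) auto
    qed
    then show False using no by blast
  qed
qed

theorem lemma1:
  fixes \<mu> :: "(real \<Rightarrow> real) pmf"
  assumes "\<forall>f\<in>set_pmf \<mu>. homeo_plus f"
    and "shiftable \<mu>"
  shows "\<forall>x::real. AE \<omega> in stream_space (measure_pmf \<mu>).
           limsup (\<lambda>n. ereal (walk n \<omega> x)) \<in> {-\<infinity>, \<infinity>} \<and>
           liminf (\<lambda>n. ereal (walk n \<omega> x)) \<in> {-\<infinity>, \<infinity>}"
proof
  fix x :: real
  interpret S: prob_space "SS \<mu>"
    by (rule prob_space.prob_space_stream_space[OF prob_space_measure_pmf])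
  have null: "Aset \<mu> (if b then 1 else -1) (real_of_int lo) (real_of_int c) m x \<in> null_sets (SS \<mu>)"
    for b lo c m
  proof -
    have "measure (SS \<mu>) (Aset \<mu> (if b then 1 else -1) (real_of_int lo) (real_of_int c) m x) = 0"
      by (rule A_zero[OF assms]) simp
    then show ?thesis using Aset_sets by (auto simp: S.emeasure_eq_measure)
  qed
  have AE1: "AE \<omega> in SS \<mu>. \<forall>b::bool. \<forall>lo::int. \<forall>c::int. \<forall>m::nat.
      \<omega> \<notin> Aset \<mu> (if b then 1 else -1) (real_of_int lo) (real_of_int c) m x"
    using null by (simp add: AE_all_countable AE_not_in)
  have "AE \<omega> in SS \<mu>. stream_all (\<lambda>g. g \<in> set_pmf \<mu>) \<omega>"
    by (rule prob_space.AE_stream_all[OF prob_space_measure_pmf])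
       (simp_all add: pred_def AE_measure_pmf)
  then have AE2: "AE \<omega> in SS \<mu>. \<omega> \<in> streams (set_pmf \<mu>)"
    by (rule eventually_mono) (simp_all add: stream_all_def streams_iff_snth)
  show "AE \<omega> in stream_space (measure_pmf \<mu>).
           limsup (\<lambda>n. ereal (walk n \<omega> x)) \<in> {-\<infinity>, \<infinity>} \<and>
           liminf (\<lambda>n. ereal (walk n \<omega> x)) \<in> {-\<infinity>, \<infinity>}"
    using AE1 AE2
  proof eventually_elim
    case (elim \<omega>)
    have w: "\<And>n. walk n \<omega> x = cw \<mu> n \<omega> x" using walk_cw[OF elim(2)] by auto
    have no: "\<not> ((\<forall>n\<ge>m. (if b then 1 else -1) * cw \<mu> n \<omega> x \<le> real_of_int c) \<and>
      (\<forall>k. \<exists>n\<ge>k. real_of_int lo \<le> (if b then 1 else -1) * cw \<mu> n \<omega> x \<and> (if b then 1 else -1) * cw \<mu> n \<omega> x \<le> real_of_int c))"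
      for b lo c m
      using elim(1)[rule_format, of b lo c m] unfolding Aset_def mem_Collect_eq .
    have "limsup (\<lambda>n. ereal (cw \<mu> n \<omega> x)) \<in> {-\<infinity>, \<infinity>} \<and> liminf (\<lambda>n. ereal (cw \<mu> n \<omega> x)) \<in> {-\<infinity>, \<infinity>}"
      by (rule pointwise[where r="\<lambda>n. cw \<mu> n \<omega> x", OF no])
    then show ?case by (simp only: w)
  qed
qed

end
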